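(* For every positive integer $h$, the sumset size set $\mathcal{R}_{\mathbf{Z}}(h,4)$ contains the $h$-term arithmetic progression $\{bh+1 : b \in [3,h+2]\}$.
   Context: For a positive integer $h$ and a finite set $A$ of integers, $hA$ denotes the set of all sums $a_1+\cdots+a_h$ with $a_1,\ldots,a_h \in A$ (not necessarily distinct). The sumset size set is $\mathcal{R}_{\mathbf{Z}}(h,k) = \{ |hA| : A \subseteq \mathbf{Z},\ |A| = k\}$. For real $u,v$, $[u,v] = \{n \in \mathbf{Z} : u \le n \le v\}$. *)

theory Defs
  imports Main
begin

definition hsumset :: "nat \<Rightarrow> int set \<Rightarrow> int set" where
  "hsumset h A = {(\<Sum>i<h. a i) | a. \<forall>i<h. a i \<in> A}"

definition sumset_sizes :: "nat \<Rightarrow> nat \<Rightarrow> nat set" where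
  "sumset_sizes h k = {card (hsumset h A) | A. finite A \<and> card A = k}"

end

theory Submission
  imports Defs
begin

lemma hs0: "hsumset 0 A = {0}"
  unfolding hsumset_def by auto

lemma hsSuc: "hsumset (Suc h) A = {x + c | x c. x \<in> hsumset h A \<and> c \<in> A}"
proof
  show "hsumset (Suc h) A \<subseteq> {x + c | x c. x \<in> hsumset h A \<and> c \<in> A}"
  proof
    fix s assume "s \<in> hsumset (Suc h) A"
    then obtain a where s: "s = (\<Sum>i<Suc h. a i)" and a: "\<forall>i<Suc h. a i \<in> A"
      unfolding hsumset_def by auto
    have "(\<Sum>i<h. a i) \<in> hsumset h A" unfolding hsumset_def using a by auto
    moreover have "s = (\<Sum>i<h. a i) + a h" using s by simp
    ultimately show "s \<in> {x + c | x c. x \<in> hsumset h A \<and> c \<in> A}" using a by blast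
  qed
next
  show "{x + c | x c. x \<in> hsumset h A \<and> c \<in> A} \<subseteq> hsumset (Suc h) A"
  proof
    fix s assume "s \<in> {x + c | x c. x \<in> hsumset h A \<and> c \<in> A}"
    then obtain a c where s: "s = (\<Sum>i<h. a i) + c" and a: "\<forall>i<h. a i \<in> A" and c: "c \<in> A"
      unfolding hsumset_def by auto
    define a' where "a' = a(h := c)"
    have "(\<Sum>i<h. a' i) = (\<Sum>i<h. a i)" unfolding a'_def by (rule sum.cong) auto
    then have "s = (\<Sum>i<Suc h. a' i)" using s by (simp add: a'_def)
    moreover have "\<forall>i<Suc h. a' i \<in> A" using a c by (auto simp: a'_def less_Suc_eq)
    ultimately show "s \<in> hsumset (Suc h) A" unfolding hsumset_def by blast
  qed
qed

lemma hs_upper: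
  assumes "\<forall>c\<in>A. 0 \<le> c \<and> c \<le> (B::int)"
  shows "hsumset h A \<subseteq> {0..int h * B}"
proof (induction h)
  case 0 then show ?case by (simp add: hs0)
next
  case (Suc h)
  show ?case
  proof
    fix s assume "s \<in> hsumset (Suc h) A"
    then obtain x c where "s = x + c" "x \<in> hsumset h A" "c \<in> A" by (auto simp: hsSuc)
    moreover have "x \<le> int h * B" "0 \<le> x" using Suc \<open>x \<in> hsumset h A\<close> by auto
    moreover have "c \<le> B" "0 \<le> c" using assms \<open>c \<in> A\<close> by auto
    ultimately show "s \<in> {0..int (Suc h) * B}" by (simp add: algebra_simps)
  qed
qed

lemma hs_mono:
  assumes "0 \<in> A" "n \<in> hsumset m A"
  shows "n \<in> hsumset (m + k) A"
proof (induction k)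
  case 0 then show ?case using assms by simp
next
  case (Suc k)
  then have "n + 0 \<in> hsumset (Suc (m + k)) A" unfolding hsSuc using assms(1) by blast
  then show ?case by simp
qed

lemma hs_comb:
  fixes b :: int
  assumes "1 \<in> A" "b - 1 \<in> A" "b \<in> A"
  shows "x + y + z = m \<Longrightarrow> int x + int y * (b - 1) + int z * b \<in> hsumset m A"
proof (induction m arbitrary: x y z)
  case 0 then show ?case by (simp add: hs0)
next
  case (Suc m)
  show ?case
  proof (cases "x > 0")
    case True
    then have "int (x - 1) + int y * (b - 1) + int z * b \<in> hsumset m A" using Suc.IH[of "x - 1" y z] Suc.prems by simp
    then have "int (x - 1) + int y * (b - 1) + int z * b + 1 \<in> hsumset (Suc m) A"
      unfolding hsSuc using assms by blast
    then show ?thesis using True by (simp add: of_nat_diff algebra_simps)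
  next
    case F1: False
    show ?thesis
    proof (cases "y > 0")
      case True
      then have "int x + int (y - 1) * (b - 1) + int z * b \<in> hsumset m A" using Suc.IH[of x "y - 1" z] Suc.prems by simp
      then have "int x + int (y - 1) * (b - 1) + int z * b + (b - 1) \<in> hsumset (Suc m) A"
        unfolding hsSuc using assms by blast
      then show ?thesis using True by (simp add: of_nat_diff algebra_simps)
    next
      case False
      then have "z > 0" using F1 Suc by auto
      then have "int x + int y * (b - 1) + int (z - 1) * b \<in> hsumset m A" using Suc.IH[of x y "z - 1"] Suc.prems by simp
      then have "int x + int y * (b - 1) + int (z - 1) * b + b \<in> hsumset (Suc m) A"
        unfolding hsSuc using assms by blast
      then show ?thesis using \<open>z > 0\<close> by (simp add: of_nat_diff algebra_simps)
    qed
  qed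
qed

lemma repr:
  fixes b h n :: nat
  assumes "3 \<le> b" "b \<le> h + 2" "n \<le> b * h"
  shows "\<exists>x y z. x + y + z \<le> h \<and> int n = int x + int y * (int b - 1) + int z * int b"
proof -
  define q r where "q = n div b" and "r = n mod b"
  have n: "n = q * b + r" unfolding q_def r_def by simp
  have rb: "r < b" unfolding r_def using assms by simp
  show ?thesis
  proof (cases "q + r \<le> h")
    case True
    show ?thesis
      by (rule exI[of _ r], rule exI[of _ 0], rule exI[of _ q]) (use True n in auto)
  next
    case False
    have "q \<le> b * h div b" unfolding q_def using assms(3) by (rule div_le_mono)
    then have "q \<le> h" using assms(1) by simp
    have "q \<noteq> h"
    proof
      assume "q = h"
      then have "r = 0" using n assms by (simp add: mult.commute)
      then show False using False \<open>q = h\<close> by simp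
    qed
    then have qh: "q + 1 \<le> h" using \<open>q \<le> h\<close> by simp
    have z: "b - r \<le> q + 1" using False assms by simp
    have "int n = int 0 + int (b - r) * (int b - 1) + int (q + 1 - (b - r)) * int b"
      using n z rb by (simp add: of_nat_diff algebra_simps)
    moreover have "0 + (b - r) + (q + 1 - (b - r)) \<le> h" using qh z by simp
    ultimately show ?thesis by blast
  qed
qed

theorem mainTheorem4:
  fixes h :: nat
  assumes "h \<ge> 1"
  shows "{b * h + 1 | b. 3 \<le> b \<and> b \<le> h + 2} \<subseteq> sumset_sizes h 4"
proof
  fix s assume "s \<in> {b * h + 1 | b. 3 \<le> b \<and> b \<le> h + 2}"
  then obtain b where s: "s = b * h + 1" and b3: "3 \<le> b" and bh: "b \<le> h + 2" by auto
  define A where "A = {0, 1, int b - 1, int b}"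
  have cA: "card A = 4" using b3 unfolding A_def by auto
  have fA: "finite A" unfolding A_def by auto
  have "hsumset h A = {0..int h * int b}"
  proof
    show "hsumset h A \<subseteq> {0..int h * int b}"
      by (rule hs_upper) (use b3 in \<open>auto simp: A_def\<close>)
  next
    show "{0..int h * int b} \<subseteq> hsumset h A"
    proof
      fix t assume t: "t \<in> {0..int h * int b}"
      define n where "n = nat t"
      have tn: "t = int n" using t n_def by auto
      have "n \<le> b * h" using t tn by (simp add: mult.commute) (metis of_nat_le_iff of_nat_mult)
      then obtain x y z where xyz: "x + y + z \<le> h"
        "int n = int x + int y * (int b - 1) + int z * int b"
        using repr b3 bh by blast
      have "int x + int y * (int b - 1) + int z * int b \<in> hsumset (x + y + z) A"
        by (rule hs_comb) (auto simp: A_def)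
      then have nin: "int n \<in> hsumset (x + y + z) A" using xyz(2) by simp
      have "int n \<in> hsumset (x + y + z + (h - (x + y + z))) A"
        by (rule hs_mono[OF _ nin]) (simp add: A_def)
      then show "t \<in> hsumset h A" using xyz tn by simp
    qed
  qed
  moreover have "nat (int h * int b + 1) = b * h + 1"
    by (metis mult.commute nat_int of_nat_1 of_nat_add of_nat_mult)
  ultimately have "card (hsumset h A) = s" using s by simp
  then show "s \<in> sumset_sizes h 4" unfolding sumset_sizes_def using cA fA by blast
qed

end
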